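(* For every positive integer $m$ there exist real coefficients $d_{m}(\alpha)$, $\alpha\subseteq[n]$ with $|\alpha|\le m$ (independent of the state), such that for every $n$-qubit pure state $\ket{\psi}$, $\sum_{\mathbf{z}\in\{0,1\}^n}w(\mathbf{z})^m p_\psi(\mathbf{z})=\sum_{\alpha\subseteq[n],\,|\alpha|\le m}d_m(\alpha)\,\mathrm{Tr}[\rho_\alpha^2]$. That is, the $m$-th moment of the number of Bell pairs generated in the parallelized SWAP test is a function only of the purities of the reduced states on at most $m$ qubits.
   Context: With $\mathbb{F}^{(i)}$ the swap of the $i$-th qubits of two copies of $\ket{\psi}$, $p_\psi(\mathbf{z})=\mathrm{Tr}\big[\big(\bigotimes_{i=1}^n\tfrac12(\mathbb{1}+(-1)^{z_i}\mathbb{F}^{(i)})\big)(\ket{\psi}\!\bra{\psi})^{\otimes 2}\big]$ is the outcome distribution of the parallelized controlled-SWAP test; $w(\mathbf{z})$ is the Hamming weight (number of Bell pairs produced); $\rho_\alpha$ is the reduced state on qubits $\alpha$, with $\mathrm{Tr}[\rho_\emptyset^2]=1$. *)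

theory Defs
  imports Complex_Main
begin

text \<open>Computational basis of n qubits: a bit string x in {0,1}^n is encoded as the
  set of positions i < n with x_i = 1, i.e. an element of Pow {..<n}.
  A (not necessarily normalised) vector is a function psi :: nat set => complex,
  only its values on Pow {..<n} matter.\<close>

definition bitstrings :: "nat \<Rightarrow> nat set set" where
  "bitstrings n = Pow {..<n}"

definition normalized_state :: "nat \<Rightarrow> (nat set \<Rightarrow> complex) \<Rightarrow> bool" where
  "normalized_state n psi \<longleftrightarrow> (\<Sum>x\<in>bitstrings n. (cmod (psi x))\<^sup>2) = 1"

definition hamming :: "nat set \<Rightarrow> nat" where
  "hamming z = card z"

text \<open>Matrix element <a' b'| 1/2 (1 + s F) |a b> of the two-qubit operator acting on the
  i-th qubit of copy 1 and copy 2, with s = (-1)^(z_i); basis states of the two copies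
  are (x, y), primed for the bra.\<close>
definition local_proj ::
  "nat set \<Rightarrow> nat \<Rightarrow> nat set \<Rightarrow> nat set \<Rightarrow> nat set \<Rightarrow> nat set \<Rightarrow> complex" where
  "local_proj z i x' y' x y =
     ((if (i \<in> x') = (i \<in> x) \<and> (i \<in> y') = (i \<in> y) then 1 else 0)
      + (if i \<in> z then -1 else 1)
        * (if (i \<in> x') = (i \<in> y) \<and> (i \<in> y') = (i \<in> x) then 1 else 0)) / 2"

definition swap_proj ::
  "nat \<Rightarrow> nat set \<Rightarrow> nat set \<Rightarrow> nat set \<Rightarrow> nat set \<Rightarrow> nat set \<Rightarrow> complex" where
  "swap_proj n z x' y' x y = (\<Prod>i<n. local_proj z i x' y' x y)"

text \<open>p_psi(z) = Tr[ Pi_z (|psi><psi|)^(tensor 2) ] = <psi psi| Pi_z |psi psi>.\<close>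
definition swap_test_prob :: "nat \<Rightarrow> (nat set \<Rightarrow> complex) \<Rightarrow> nat set \<Rightarrow> complex" where
  "swap_test_prob n psi z =
     (\<Sum>x'\<in>bitstrings n. \<Sum>y'\<in>bitstrings n. \<Sum>x\<in>bitstrings n. \<Sum>y\<in>bitstrings n.
        cnj (psi x') * cnj (psi y') * swap_proj n z x' y' x y * psi x * psi y)"

definition reduced_state ::
  "nat \<Rightarrow> (nat set \<Rightarrow> complex) \<Rightarrow> nat set \<Rightarrow> nat set \<Rightarrow> nat set \<Rightarrow> complex" where
  "reduced_state n psi \<alpha> a a' =
     (\<Sum>b\<in>Pow ({..<n} - \<alpha>). psi (a \<union> b) * cnj (psi (a' \<union> b)))"

definition purity :: "nat \<Rightarrow> (nat set \<Rightarrow> complex) \<Rightarrow> nat set \<Rightarrow> complex" where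
  "purity n psi \<alpha> =
     (\<Sum>a\<in>Pow \<alpha>. \<Sum>a'\<in>Pow \<alpha>. reduced_state n psi \<alpha> a a' * reduced_state n psi \<alpha> a' a)"

end

theory Submission imports Defs begin

definition sgnz :: "nat set \<Rightarrow> nat set \<Rightarrow> real" where
  "sgnz z \<beta> = (\<Prod>i\<in>\<beta>. if i \<in> z then -1 else 1)"

lemma sgnz_flip:
  assumes "finite \<beta>" "j \<in> \<beta>"
  shows "sgnz (if j \<in> z then z - {j} else insert j z) \<beta> = - sgnz z \<beta>"
proof -
  let ?h = "if j \<in> z then z - {j} else insert j z"
  have "sgnz ?h \<beta> = (if j \<in> ?h then -1 else 1) * (\<Prod>i\<in>\<beta>-{j}. if i \<in> ?h then -1 else 1)"
    unfolding sgnz_def using assms by (simp add: prod.remove)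
  also have "(\<Prod>i\<in>\<beta>-{j}. if i \<in> ?h then -1 else (1::real)) = (\<Prod>i\<in>\<beta>-{j}. if i \<in> z then -1 else 1)"
    by (rule prod.cong) auto
  also have "sgnz z \<beta> = (if j \<in> z then -1 else 1) * (\<Prod>i\<in>\<beta>-{j}. if i \<in> z then -1 else 1)"
    unfolding sgnz_def using assms by (simp add: prod.remove)
  ultimately show ?thesis by auto
qed

lemma vanish_base:
  assumes "finite N" "\<beta> \<subseteq> N" "S \<subseteq> N" "card S < card \<beta>"
  shows "(\<Sum>z\<in>Pow N. (if S \<subseteq> z then 1 else 0) * sgnz z \<beta>) = 0"
proof -
  have fb: "finite \<beta>" using assms finite_subset by blast
  have "\<not> \<beta> \<subseteq> S" using assms(4) card_mono assms(1,3) finite_subset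
    by (metis leD)
  then obtain j where j: "j \<in> \<beta>" "j \<notin> S" by blast
  define h where "h z = (if j \<in> z then z - {j} else insert j z)" for z
  have hh: "h (h z) = z" for z unfolding h_def by auto
  have bij: "bij_betw h (Pow N) (Pow N)"
    by (rule bij_betw_byWitness[where f'=h]) (use hh j assms(2) in \<open>auto simp: h_def\<close>)
  let ?f = "\<lambda>z. (if S \<subseteq> z then 1 else 0) * sgnz z \<beta>"
  have fh: "?f (h z) = - ?f z" if "z \<in> Pow N" for z
  proof -
    have "S \<subseteq> h z \<longleftrightarrow> S \<subseteq> z" using j unfolding h_def by auto
    moreover have "sgnz (h z) \<beta> = - sgnz z \<beta>" unfolding h_def by (rule sgnz_flip[OF fb j(1)])
    ultimately show ?thesis by simp
  qed
  have "sum ?f (Pow N) = sum (?f \<circ> h) (Pow N)"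
    using sum.reindex_bij_betw[OF bij, of ?f] by simp
  also have "\<dots> = - sum ?f (Pow N)"
    by (simp add: fh sum_negf)
  finally show ?thesis by simp
qed

lemma vanish:
  assumes "finite N" "\<beta> \<subseteq> N"
  shows "S \<subseteq> N \<Longrightarrow> card S + m < card \<beta> \<Longrightarrow>
    (\<Sum>z\<in>Pow N. (if S \<subseteq> z then 1 else 0) * real (card z) ^ m * sgnz z \<beta>) = 0"
proof (induction m arbitrary: S)
  case 0
  then show ?case using vanish_base[OF assms, of S] by simp
next
  case (Suc m)
  have cz: "real (card z) = (\<Sum>i\<in>N. if i \<in> z then 1 else 0)" if "z \<subseteq> N" for z
  proof -
    have "(\<Sum>i\<in>N. if i \<in> z then 1 else (0::real)) = real (card (N \<inter> z))"
      using assms(1) by (simp add: sum.If_cases)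
    also have "N \<inter> z = z" using that by auto
    finally show ?thesis by simp
  qed
  have "(\<Sum>z\<in>Pow N. (if S \<subseteq> z then 1 else 0) * real (card z) ^ Suc m * sgnz z \<beta>)
      = (\<Sum>z\<in>Pow N. \<Sum>i\<in>N. (if insert i S \<subseteq> z then 1 else 0) * real (card z) ^ m * sgnz z \<beta>)"
  proof (rule sum.cong[OF refl])
    fix z assume z: "z \<in> Pow N"
    have "(if S \<subseteq> z then 1 else 0) * real (card z) ^ Suc m * sgnz z \<beta>
       = (\<Sum>i\<in>N. if i \<in> z then 1 else 0) * ((if S \<subseteq> z then 1 else 0) * real (card z) ^ m * sgnz z \<beta>)"
      using cz[of z] z by simp
    also have "\<dots> = (\<Sum>i\<in>N. (if i \<in> z then 1 else 0) * ((if S \<subseteq> z then 1 else 0) * real (card z) ^ m * sgnz z \<beta>))"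
      by (simp add: sum_distrib_right)
    also have "\<dots> = (\<Sum>i\<in>N. (if insert i S \<subseteq> z then 1 else 0) * real (card z) ^ m * sgnz z \<beta>)"
      by (rule sum.cong) auto
    finally show "(if S \<subseteq> z then 1 else 0) * real (card z) ^ Suc m * sgnz z \<beta>
       = (\<Sum>i\<in>N. (if insert i S \<subseteq> z then 1 else 0) * real (card z) ^ m * sgnz z \<beta>)" .
  qed
  also have "\<dots> = (\<Sum>i\<in>N. \<Sum>z\<in>Pow N. (if insert i S \<subseteq> z then 1 else 0) * real (card z) ^ m * sgnz z \<beta>)"
    by (rule sum.swap)
  also have "\<dots> = 0"
  proof (rule sum.neutral, rule ballI)
    fix i assume i: "i \<in> N"
    have fS: "finite S" using Suc.prems(1) assms(1) finite_subset by blast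
    have "card (insert i S) \<le> card S + 1" using fS by (simp add: card_insert_if)
    then show "(\<Sum>z\<in>Pow N. (if insert i S \<subseteq> z then 1 else 0) * real (card z) ^ m * sgnz z \<beta>) = 0"
      using Suc.IH[of "insert i S"] Suc.prems i by simp
  qed
  finally show ?case .
qed


lemma pow_split_sum:
  assumes "A \<inter> B = {}" "finite A" "finite B"
  shows "(\<Sum>a\<in>Pow A. \<Sum>b\<in>Pow B. f (a \<union> b)) = (\<Sum>x\<in>Pow (A \<union> B). f x)"
proof -
  have bij: "bij_betw (\<lambda>(a,b). a \<union> b) (Pow A \<times> Pow B) (Pow (A \<union> B))"
    by (rule bij_betw_byWitness[where f'="\<lambda>x. (x \<inter> A, x \<inter> B)"]) (use assms(1) in auto)
  have "(\<Sum>a\<in>Pow A. \<Sum>b\<in>Pow B. f (a \<union> b)) = (\<Sum>p\<in>Pow A \<times> Pow B. f ((\<lambda>(a,b). a \<union> b) p))"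
    by (simp add: sum.cartesian_product case_prod_beta')
  also have "\<dots> = (\<Sum>x\<in>Pow (A \<union> B). f x)"
    using sum.reindex_bij_betw[OF bij, of f] by (simp add: comp_def)
  finally show ?thesis .
qed

definition Tb :: "nat \<Rightarrow> (nat set \<Rightarrow> complex) \<Rightarrow> nat set \<Rightarrow> complex" where
  "Tb n psi \<beta> = (\<Sum>x\<in>Pow {..<n}. \<Sum>y\<in>Pow {..<n}.
     psi x * psi y * cnj (psi ((y \<inter> \<beta>) \<union> (x - \<beta>))) * cnj (psi ((x \<inter> \<beta>) \<union> (y - \<beta>))))"

lemma purity_Tb:
  assumes "\<beta> \<subseteq> {..<n}"
  shows "purity n psi \<beta> = Tb n psi \<beta>"
proof -
  let ?C = "{..<n} - \<beta>"
  let ?G = "\<lambda>x y. psi x * psi y * cnj (psi ((y \<inter> \<beta>) \<union> (x - \<beta>))) * cnj (psi ((x \<inter> \<beta>) \<union> (y - \<beta>)))"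
  have fb: "finite \<beta>" using assms finite_subset by blast
  have un: "\<beta> \<union> ?C = {..<n}" using assms by auto
  have "purity n psi \<beta> = (\<Sum>a\<in>Pow \<beta>. \<Sum>a'\<in>Pow \<beta>. \<Sum>b\<in>Pow ?C. \<Sum>c\<in>Pow ?C.
      psi (a \<union> b) * cnj (psi (a' \<union> b)) * (psi (a' \<union> c) * cnj (psi (a \<union> c))))"
    unfolding purity_def reduced_state_def by (simp add: sum_product)
  also have "\<dots> = (\<Sum>a\<in>Pow \<beta>. \<Sum>a'\<in>Pow \<beta>. \<Sum>b\<in>Pow ?C. \<Sum>c\<in>Pow ?C. ?G (a \<union> b) (a' \<union> c))"
  proof (intro sum.cong refl)
    fix a a' b c assume "a \<in> Pow \<beta>" "a' \<in> Pow \<beta>" "b \<in> Pow ?C" "c \<in> Pow ?C"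
    then have e1: "((a' \<union> c) \<inter> \<beta>) \<union> ((a \<union> b) - \<beta>) = a' \<union> b"
      and e2: "((a \<union> b) \<inter> \<beta>) \<union> ((a' \<union> c) - \<beta>) = a \<union> c" by auto
    show "psi (a \<union> b) * cnj (psi (a' \<union> b)) * (psi (a' \<union> c) * cnj (psi (a \<union> c))) = ?G (a \<union> b) (a' \<union> c)"
      by (simp only: e1 e2) (simp add: algebra_simps)
  qed
  also have "\<dots> = (\<Sum>a\<in>Pow \<beta>. \<Sum>b\<in>Pow ?C. \<Sum>a'\<in>Pow \<beta>. \<Sum>c\<in>Pow ?C. ?G (a \<union> b) (a' \<union> c))"
    by (rule sum.cong[OF refl], rule sum.swap)
  also have "\<dots> = (\<Sum>a\<in>Pow \<beta>. \<Sum>b\<in>Pow ?C. \<Sum>y\<in>Pow {..<n}. ?G (a \<union> b) y)"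
  proof (rule sum.cong[OF refl], rule sum.cong[OF refl])
    fix a b
    show "(\<Sum>a'\<in>Pow \<beta>. \<Sum>c\<in>Pow ?C. ?G (a \<union> b) (a' \<union> c)) = (\<Sum>y\<in>Pow {..<n}. ?G (a \<union> b) y)"
      using pow_split_sum[of \<beta> ?C "\<lambda>y. ?G (a \<union> b) y", OF _ fb] un by simp
  qed
  also have "\<dots> = (\<Sum>x\<in>Pow {..<n}. \<Sum>y\<in>Pow {..<n}. ?G x y)"
    using pow_split_sum[of \<beta> ?C "\<lambda>x. \<Sum>y\<in>Pow {..<n}. ?G x y", OF _ fb] un by simp
  finally show ?thesis unfolding Tb_def .
qed


lemma s3: "(\<Sum>a\<in>A. \<Sum>b\<in>B. \<Sum>e\<in>E. f a b e) = (\<Sum>e\<in>E. \<Sum>a\<in>A. \<Sum>b\<in>B. f a b e)"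
proof -
  have "(\<Sum>a\<in>A. \<Sum>b\<in>B. \<Sum>e\<in>E. f a b e) = (\<Sum>a\<in>A. \<Sum>e\<in>E. \<Sum>b\<in>B. f a b e)"
    by (rule sum.cong[OF refl], rule sum.swap)
  also have "\<dots> = (\<Sum>e\<in>E. \<Sum>a\<in>A. \<Sum>b\<in>B. f a b e)" by (rule sum.swap)
  finally show ?thesis .
qed

lemma s4: "(\<Sum>a\<in>A. \<Sum>b\<in>B. \<Sum>c\<in>C. \<Sum>e\<in>E. f a b c e) = (\<Sum>e\<in>E. \<Sum>a\<in>A. \<Sum>b\<in>B. \<Sum>c\<in>C. f a b c e)"
proof -
  have "(\<Sum>a\<in>A. \<Sum>b\<in>B. \<Sum>c\<in>C. \<Sum>e\<in>E. f a b c e) = (\<Sum>a\<in>A. \<Sum>e\<in>E. \<Sum>b\<in>B. \<Sum>c\<in>C. f a b c e)"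
    by (rule sum.cong[OF refl], rule s3)
  also have "\<dots> = (\<Sum>e\<in>E. \<Sum>a\<in>A. \<Sum>b\<in>B. \<Sum>c\<in>C. f a b c e)" by (rule sum.swap)
  finally show ?thesis .
qed

lemma s5: "(\<Sum>a\<in>A. \<Sum>b\<in>B. \<Sum>c\<in>C. \<Sum>d\<in>D. \<Sum>e\<in>E. f a b c d e) = (\<Sum>e\<in>E. \<Sum>a\<in>A. \<Sum>b\<in>B. \<Sum>c\<in>C. \<Sum>d\<in>D. f a b c d e)"
proof -
  have "(\<Sum>a\<in>A. \<Sum>b\<in>B. \<Sum>c\<in>C. \<Sum>d\<in>D. \<Sum>e\<in>E. f a b c d e) = (\<Sum>a\<in>A. \<Sum>e\<in>E. \<Sum>b\<in>B. \<Sum>c\<in>C. \<Sum>d\<in>D. f a b c d e)"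
    by (rule sum.cong[OF refl], rule s4)
  also have "\<dots> = (\<Sum>e\<in>E. \<Sum>a\<in>A. \<Sum>b\<in>B. \<Sum>c\<in>C. \<Sum>d\<in>D. f a b c d e)" by (rule sum.swap)
  finally show ?thesis .
qed

lemma prod_ind:
  assumes "finite A"
  shows "(\<Prod>i\<in>A. if P i then 1 else 0 :: complex) = (if \<forall>i\<in>A. P i then 1 else 0)"
  using assms by (induction A rule: finite_induct) auto

definition Ef :: "nat set \<Rightarrow> nat set \<Rightarrow> nat set \<Rightarrow> nat set \<Rightarrow> nat \<Rightarrow> bool" where
  "Ef x' y' x y i \<longleftrightarrow> (i \<in> x') = (i \<in> x) \<and> (i \<in> y') = (i \<in> y)"
definition Ff :: "nat set \<Rightarrow> nat set \<Rightarrow> nat set \<Rightarrow> nat set \<Rightarrow> nat \<Rightarrow> bool" where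
  "Ff x' y' x y i \<longleftrightarrow> (i \<in> x') = (i \<in> y) \<and> (i \<in> y') = (i \<in> x)"

lemma sp:
  "swap_proj n z x' y' x y = (\<Sum>\<beta>\<in>Pow {..<n}. complex_of_real (sgnz z \<beta> / 2 ^ n) *
     ((\<Prod>i\<in>\<beta>. if Ff x' y' x y i then 1 else 0) * (\<Prod>i\<in>{..<n}-\<beta>. if Ef x' y' x y i then 1 else 0)))"
proof -
  let ?F = "\<lambda>i. if Ff x' y' x y i then 1 else 0 :: complex"
  let ?E = "\<lambda>i. if Ef x' y' x y i then 1 else 0 :: complex"
  let ?s = "\<lambda>i. if i \<in> z then -1 else 1 :: complex"
  have "swap_proj n z x' y' x y = (\<Prod>i<n. ?s i * ?F i * (1/2) + ?E i * (1/2))"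
    unfolding swap_proj_def local_proj_def Ef_def Ff_def
    by (rule prod.cong) (auto simp: field_simps)
  also have "\<dots> = (\<Sum>\<beta>\<in>Pow {..<n}. (\<Prod>i\<in>\<beta>. ?s i * ?F i * (1/2)) * (\<Prod>i\<in>{..<n}-\<beta>. ?E i * (1/2)))"
    by (rule prod_add) simp
  also have "\<dots> = (\<Sum>\<beta>\<in>Pow {..<n}. complex_of_real (sgnz z \<beta> / 2 ^ n) *
     ((\<Prod>i\<in>\<beta>. ?F i) * (\<Prod>i\<in>{..<n}-\<beta>. ?E i)))"
  proof (rule sum.cong[OF refl])
    fix \<beta> assume b: "\<beta> \<in> Pow {..<n}"
    have fb: "finite \<beta>" using b finite_subset by blast
    have cn: "card ({..<n} - \<beta>) = n - card \<beta>" using b by (simp add: card_Diff_subset fb)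
    have cb: "card \<beta> \<le> n" using b card_mono[of "{..<n}" \<beta>] by auto
    have sg: "complex_of_real (sgnz z \<beta>) = (\<Prod>i\<in>\<beta>. ?s i)"
      unfolding sgnz_def of_real_prod by (rule prod.cong) auto
    have p2: "(1/2::complex) ^ card \<beta> * (1/2) ^ (n - card \<beta>) = 1 / 2 ^ n"
      using cb by (simp add: power_add[symmetric] power_divide)
    show "(\<Prod>i\<in>\<beta>. ?s i * ?F i * (1/2)) * (\<Prod>i\<in>{..<n}-\<beta>. ?E i * (1/2)) = complex_of_real (sgnz z \<beta> / 2 ^ n) *
     ((\<Prod>i\<in>\<beta>. ?F i) * (\<Prod>i\<in>{..<n}-\<beta>. ?E i))"
      unfolding prod.distrib sg of_real_divide
      using p2 cn by (simp add: field_simps)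
  qed
  finally show ?thesis .
qed


lemma Kev:
  assumes "x' \<subseteq> {..<n}" "y' \<subseteq> {..<n}" "x \<subseteq> {..<n}" "y \<subseteq> {..<n}" "\<beta> \<subseteq> {..<n}"
  shows "(\<Prod>i\<in>\<beta>. if Ff x' y' x y i then 1 else 0) * (\<Prod>i\<in>{..<n}-\<beta>. if Ef x' y' x y i then 1 else 0)
    = (if x' = (y \<inter> \<beta>) \<union> (x - \<beta>) then if y' = (x \<inter> \<beta>) \<union> (y - \<beta>) then 1 else 0 else (0::complex))"
proof -
  have fb: "finite \<beta>" using assms finite_subset by blast
  have "(\<forall>i\<in>\<beta>. Ff x' y' x y i) \<and> (\<forall>i\<in>{..<n}-\<beta>. Ef x' y' x y i) \<longleftrightarrow>
        x' = (y \<inter> \<beta>) \<union> (x - \<beta>) \<and> y' = (x \<inter> \<beta>) \<union> (y - \<beta>)"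
  proof
    assume H: "(\<forall>i\<in>\<beta>. Ff x' y' x y i) \<and> (\<forall>i\<in>{..<n}-\<beta>. Ef x' y' x y i)"
    show "x' = (y \<inter> \<beta>) \<union> (x - \<beta>) \<and> y' = (x \<inter> \<beta>) \<union> (y - \<beta>)"
    proof (intro conjI set_eqI)
      fix i
      show "i \<in> x' \<longleftrightarrow> i \<in> (y \<inter> \<beta>) \<union> (x - \<beta>)"
        using H assms unfolding Ff_def Ef_def by (cases "i \<in> \<beta>"; cases "i < n") auto
      show "i \<in> y' \<longleftrightarrow> i \<in> (x \<inter> \<beta>) \<union> (y - \<beta>)"
        using H assms unfolding Ff_def Ef_def by (cases "i \<in> \<beta>"; cases "i < n") auto
    qed
  next
    assume "x' = (y \<inter> \<beta>) \<union> (x - \<beta>) \<and> y' = (x \<inter> \<beta>) \<union> (y - \<beta>)"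
    then show "(\<forall>i\<in>\<beta>. Ff x' y' x y i) \<and> (\<forall>i\<in>{..<n}-\<beta>. Ef x' y' x y i)"
      unfolding Ff_def Ef_def by auto
  qed
  moreover have "(\<Prod>i\<in>\<beta>. if Ff x' y' x y i then 1 else 0) = (if \<forall>i\<in>\<beta>. Ff x' y' x y i then 1 else (0::complex))"
    by (rule prod_ind[OF fb])
  moreover have "(\<Prod>i\<in>{..<n}-\<beta>. if Ef x' y' x y i then 1 else 0) = (if \<forall>i\<in>{..<n}-\<beta>. Ef x' y' x y i then 1 else (0::complex))"
    by (rule prod_ind) simp
  ultimately show ?thesis
    by (smt (verit) mult_cancel_left1 mult_eq_0_iff)
qed

lemma stp:
  "swap_test_prob n psi z = (\<Sum>\<beta>\<in>Pow {..<n}. complex_of_real (sgnz z \<beta> / 2 ^ n) * Tb n psi \<beta>)"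
proof -
  let ?B = "Pow {..<n}"
  let ?K = "\<lambda>\<beta> x' y' x y. (\<Prod>i\<in>\<beta>. if Ff x' y' x y i then 1 else 0) * (\<Prod>i\<in>{..<n}-\<beta>. if Ef x' y' x y i then 1 else (0::complex))"
  let ?c = "\<lambda>\<beta>. complex_of_real (sgnz z \<beta> / 2 ^ n)"
  have "swap_test_prob n psi z = (\<Sum>x'\<in>?B. \<Sum>y'\<in>?B. \<Sum>x\<in>?B. \<Sum>y\<in>?B. \<Sum>\<beta>\<in>?B.
      ?c \<beta> * (cnj (psi x') * cnj (psi y') * ?K \<beta> x' y' x y * psi x * psi y))"
    unfolding swap_test_prob_def bitstrings_def sp
  proof (intro sum.cong refl)
    fix x' y' x y
    have "cnj (psi x') * cnj (psi y') * (\<Sum>\<beta>\<in>?B. ?c \<beta> * ?K \<beta> x' y' x y) * psi x * psi y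
      = (\<Sum>\<beta>\<in>?B. cnj (psi x') * cnj (psi y') * (?c \<beta> * ?K \<beta> x' y' x y) * psi x * psi y)"
      by (simp add: sum_distrib_left sum_distrib_right)
    also have "\<dots> = (\<Sum>\<beta>\<in>?B. ?c \<beta> * (cnj (psi x') * cnj (psi y') * ?K \<beta> x' y' x y * psi x * psi y))"
      by (rule sum.cong) (simp_all only: ac_simps)
    finally show "cnj (psi x') * cnj (psi y') * (\<Sum>\<beta>\<in>?B. ?c \<beta> * ?K \<beta> x' y' x y) * psi x * psi y
      = (\<Sum>\<beta>\<in>?B. ?c \<beta> * (cnj (psi x') * cnj (psi y') * ?K \<beta> x' y' x y * psi x * psi y))" .
  qed
  also have "\<dots> = (\<Sum>\<beta>\<in>?B. \<Sum>x'\<in>?B. \<Sum>y'\<in>?B. \<Sum>x\<in>?B. \<Sum>y\<in>?B.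
      ?c \<beta> * (cnj (psi x') * cnj (psi y') * ?K \<beta> x' y' x y * psi x * psi y))"
    by (rule s5)
  also have "\<dots> = (\<Sum>\<beta>\<in>?B. ?c \<beta> * Tb n psi \<beta>)"
  proof (rule sum.cong[OF refl])
    fix \<beta> assume b: "\<beta> \<in> ?B"
    have "(\<Sum>x'\<in>?B. \<Sum>y'\<in>?B. \<Sum>x\<in>?B. \<Sum>y\<in>?B. cnj (psi x') * cnj (psi y') * ?K \<beta> x' y' x y * psi x * psi y)
      = (\<Sum>x\<in>?B. \<Sum>x'\<in>?B. \<Sum>y'\<in>?B. \<Sum>y\<in>?B. cnj (psi x') * cnj (psi y') * ?K \<beta> x' y' x y * psi x * psi y)"
      by (rule s3)
    also have "\<dots> = (\<Sum>x\<in>?B. \<Sum>y\<in>?B. \<Sum>x'\<in>?B. \<Sum>y'\<in>?B. cnj (psi x') * cnj (psi y') * ?K \<beta> x' y' x y * psi x * psi y)"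
      by (rule sum.cong[OF refl], rule s3)
    also have "\<dots> = Tb n psi \<beta>"
      unfolding Tb_def
    proof (rule sum.cong[OF refl], rule sum.cong[OF refl])
      fix x y assume x: "x \<in> ?B" and y: "y \<in> ?B"
      let ?X = "(y \<inter> \<beta>) \<union> (x - \<beta>)"
      let ?Y = "(x \<inter> \<beta>) \<union> (y - \<beta>)"
      let ?g = "\<lambda>x' y'. cnj (psi x') * cnj (psi y') * psi x * psi y"
      have XB: "?X \<in> ?B" and YB: "?Y \<in> ?B" using x y by auto
      have "(\<Sum>x'\<in>?B. \<Sum>y'\<in>?B. cnj (psi x') * cnj (psi y') * ?K \<beta> x' y' x y * psi x * psi y)
        = (\<Sum>x'\<in>?B. if x' = ?X then (\<Sum>y'\<in>?B. if y' = ?Y then ?g x' y' else 0) else 0)"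
      proof (rule sum.cong[OF refl])
        fix x' assume x': "x' \<in> ?B"
        show "(\<Sum>y'\<in>?B. cnj (psi x') * cnj (psi y') * ?K \<beta> x' y' x y * psi x * psi y)
          = (if x' = ?X then (\<Sum>y'\<in>?B. if y' = ?Y then ?g x' y' else 0) else 0)"
        proof (cases "x' = ?X")
          case True
          show ?thesis unfolding if_P[OF True]
          proof (rule sum.cong[OF refl])
            fix y' assume y': "y' \<in> ?B"
            have "?K \<beta> x' y' x y = (if y' = ?Y then 1 else 0)"
              using Kev[of x' n y' x y \<beta>] x y x' y' b True by simp
            then show "cnj (psi x') * cnj (psi y') * ?K \<beta> x' y' x y * psi x * psi y = (if y' = ?Y then ?g x' y' else 0)"
              by simp
          qed
        next
          case False
          show ?thesis unfolding if_not_P[OF False]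
          proof (rule sum.neutral, rule ballI)
            fix y' assume y': "y' \<in> ?B"
            have "?K \<beta> x' y' x y = 0"
              using Kev[of x' n y' x y \<beta>] x y x' y' b False by simp
            then show "cnj (psi x') * cnj (psi y') * ?K \<beta> x' y' x y * psi x * psi y = 0"
              by simp
          qed
        qed
      qed
      also have "\<dots> = ?g ?X ?Y"
        by (simp only: sum.delta XB YB if_True finite_Pow_iff finite_lessThan)
      finally show "(\<Sum>x'\<in>?B. \<Sum>y'\<in>?B. cnj (psi x') * cnj (psi y') * ?K \<beta> x' y' x y * psi x * psi y)
        = psi x * psi y * cnj (psi ((y \<inter> \<beta>) \<union> (x - \<beta>))) * cnj (psi ((x \<inter> \<beta>) \<union> (y - \<beta>)))"
        by (simp add: algebra_simps)
    qed
    finally have T: "(\<Sum>x'\<in>?B. \<Sum>y'\<in>?B. \<Sum>x\<in>?B. \<Sum>y\<in>?B. cnj (psi x') * cnj (psi y') * ?K \<beta> x' y' x y * psi x * psi y) = Tb n psi \<beta>" .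
    show "(\<Sum>x'\<in>?B. \<Sum>y'\<in>?B. \<Sum>x\<in>?B. \<Sum>y\<in>?B.
      ?c \<beta> * (cnj (psi x') * cnj (psi y') * ?K \<beta> x' y' x y * psi x * psi y)) = ?c \<beta> * Tb n psi \<beta>"
      by (simp only: T[symmetric] sum_distrib_left)
  qed
  finally show ?thesis .
qed


theorem mainTheorem16:
  fixes n m :: nat
  assumes "m \<ge> 1"
  shows "\<exists>d :: nat set \<Rightarrow> real. \<forall>psi :: nat set \<Rightarrow> complex.
           normalized_state n psi \<longrightarrow>
           (\<Sum>z\<in>bitstrings n. of_nat (hamming z ^ m) * swap_test_prob n psi z)
           = (\<Sum>\<alpha>\<in>{\<alpha>. \<alpha> \<subseteq> {..<n} \<and> card \<alpha> \<le> m}. complex_of_real (d \<alpha>) * purity n psi \<alpha>)"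
proof -
  let ?B = "Pow {..<n}"
  define d where "d \<beta> = (\<Sum>z\<in>?B. real (card z) ^ m * sgnz z \<beta>) / 2 ^ n" for \<beta>
  have d0: "d \<beta> = 0" if "\<beta> \<subseteq> {..<n}" "m < card \<beta>" for \<beta>
    using vanish[of "{..<n}" \<beta> "{}" m] that unfolding d_def by simp
  show ?thesis
  proof (intro exI allI impI)
    fix psi :: "nat set \<Rightarrow> complex"
    have "(\<Sum>z\<in>bitstrings n. of_nat (hamming z ^ m) * swap_test_prob n psi z)
        = (\<Sum>z\<in>?B. \<Sum>\<beta>\<in>?B. of_nat (card z ^ m) * (complex_of_real (sgnz z \<beta> / 2 ^ n) * purity n psi \<beta>))"
      unfolding bitstrings_def hamming_def stp
      by (intro sum.cong refl) (simp add: sum_distrib_left purity_Tb)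
    also have "\<dots> = (\<Sum>\<beta>\<in>?B. \<Sum>z\<in>?B. of_nat (card z ^ m) * (complex_of_real (sgnz z \<beta> / 2 ^ n) * purity n psi \<beta>))"
      by (rule sum.swap)
    also have "\<dots> = (\<Sum>\<beta>\<in>?B. complex_of_real (d \<beta>) * purity n psi \<beta>)"
    proof (rule sum.cong[OF refl])
      fix \<beta>
      have "complex_of_real (d \<beta>) = (\<Sum>z\<in>?B. of_nat (card z ^ m) * complex_of_real (sgnz z \<beta> / 2 ^ n))"
        unfolding d_def by (simp add: sum_divide_distrib of_real_sum)
      then show "(\<Sum>z\<in>?B. of_nat (card z ^ m) * (complex_of_real (sgnz z \<beta> / 2 ^ n) * purity n psi \<beta>))
          = complex_of_real (d \<beta>) * purity n psi \<beta>"
        by (simp add: sum_distrib_right mult.assoc)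
    qed
    also have "\<dots> = (\<Sum>\<alpha>\<in>{\<alpha>. \<alpha> \<subseteq> {..<n} \<and> card \<alpha> \<le> m}. complex_of_real (d \<alpha>) * purity n psi \<alpha>)"
      by (rule sum.mono_neutral_right) (auto simp: d0 not_le)
    finally show "(\<Sum>z\<in>bitstrings n. of_nat (hamming z ^ m) * swap_test_prob n psi z)
           = (\<Sum>\<alpha>\<in>{\<alpha>. \<alpha> \<subseteq> {..<n} \<and> card \<alpha> \<le> m}. complex_of_real (d \<alpha>) * purity n psi \<alpha>)" .
  qed
qed

end
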